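(* Let $\Phi=B_l$ with $l\ge2$, fix a system of positive roots $\Phi^+$, and let $\Delta$ be a nonempty subset of $\Phi^+$. Then there exist a long root $\alpha\in\Phi^+$ and a root $\beta\in\Delta$ such that $\alpha+\gamma\notin\Phi$ for all $\gamma\in\Delta$ and $(\alpha,\beta)\ne0$.
   Context: $(\cdot,\cdot)$ denotes the inner product of the Euclidean space containing the root system. *)

theory Defs
  imports "HOL-Analysis.Analysis"
begin

text \<open>The root system of type B_l realised in the Euclidean space real^'n, l = CARD('n):
  short roots \<pm>e_i, long roots \<pm>e_i \<pm> e_j (i \<noteq> j).\<close>

definition rootsB :: "(real^'n) set" where
  "rootsB = {v. \<exists>i. v = axis i 1 \<or> v = - axis i 1}
          \<union> {v. \<exists>i j s t. i \<noteq> j \<and> (s = 1 \<or> s = -1) \<and> (t = 1 \<or> t = -1)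
                         \<and> v = s *\<^sub>R axis i 1 + t *\<^sub>R axis j 1}"

definition long_rootB :: "real^'n \<Rightarrow> bool" where
  "long_rootB (v :: real^'n) \<longleftrightarrow> v \<in> rootsB \<and> (\<forall>u\<in>(rootsB :: (real^'n) set). u \<bullet> u \<le> v \<bullet> v)"

definition positive_systemB :: "(real^'n) set \<Rightarrow> bool" where
  "positive_systemB (P :: (real^'n) set) \<longleftrightarrow>
     (\<exists>w. (\<forall>a\<in>(rootsB :: (real^'n) set). a \<bullet> w \<noteq> 0) \<and> P = {a \<in> rootsB. a \<bullet> w > 0})"

end

theory Submission
  imports Defs
begin

lemma roots_norm: "v \<in> (rootsB::(real^'n) set) \<Longrightarrow> v \<bullet> v = 1 \<or> v \<bullet> v = 2"
  unfolding rootsB_def by (auto simp: inner_axis_axis algebra_simps)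

lemma roots_int: "u \<in> (rootsB::(real^'n) set) \<Longrightarrow> v \<in> rootsB \<Longrightarrow> u \<bullet> v \<in> \<int>"
  unfolding rootsB_def by (auto simp: inner_axis_axis algebra_simps)

lemma roots_cases:
  assumes "v \<in> (rootsB::(real^'n) set)"
  obtains (a) i where "v = axis i 1 \<or> v = - axis i 1"
    | (b) i j s t where "i \<noteq> j" "s = 1 \<or> s = -1" "t = 1 \<or> t = -1" "v = s *\<^sub>R axis i 1 + t *\<^sub>R axis j (1::real)"
  using assms unfolding rootsB_def by blast

lemma roots_neg: "v \<in> (rootsB::(real^'n) set) \<Longrightarrow> - v \<in> rootsB"
proof -
  assume "v \<in> rootsB"
  then consider (a) i where "v = axis i 1 \<or> v = - axis i 1"
    | (b) i j s t where "i \<noteq> j" "s = 1 \<or> s = -1" "t = 1 \<or> t = -1" "v = s *\<^sub>R axis i 1 + t *\<^sub>R axis j (1::real)"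
    unfolding rootsB_def by blast
  then show ?thesis
  proof cases
    case a then show ?thesis unfolding rootsB_def by auto
  next
    case b
    then have "-v = (-s) *\<^sub>R axis i 1 + (-t) *\<^sub>R axis j 1" by simp
    moreover have "-s = 1 \<or> -s = -1" "-t = 1 \<or> -t = -1" using b by auto
    ultimately show ?thesis unfolding rootsB_def using b(1) by blast
  qed
qed

lemma finite_roots: "finite (rootsB::(real^'n) set)"
proof -
  have "rootsB \<subseteq> range (\<lambda>i::'n. axis i (1::real)) \<union> range (\<lambda>i::'n. - axis i (1::real))
     \<union> (\<lambda>(i,j,s,t). s *\<^sub>R axis i 1 + t *\<^sub>R axis j 1) ` (UNIV \<times> UNIV \<times> {1,-1::real} \<times> {1,-1::real})"
  proof
    fix v assume "v \<in> (rootsB::(real^'n) set)"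
    then show "v \<in> range (\<lambda>i::'n. axis i (1::real)) \<union> range (\<lambda>i::'n. - axis i (1::real))
     \<union> (\<lambda>(i,j,s,t). s *\<^sub>R axis i 1 + t *\<^sub>R axis j 1) ` (UNIV \<times> UNIV \<times> {1,-1::real} \<times> {1,-1::real})"
    proof (cases rule: roots_cases)
      case (a i) then show ?thesis by auto
    next
      case (b i j s t) then show ?thesis
        by (intro UnI2 image_eqI[of _ _ "(i,j,s,t)"]) auto
    qed
  qed
  then show ?thesis by (rule finite_subset) auto
qed

lemma second_norm: "(i::'n::finite) \<noteq> j \<Longrightarrow> (s = 1 \<or> s = -1) \<Longrightarrow> (t = 1 \<or> t = -1) \<Longrightarrow>
   (s *\<^sub>R axis i 1 + t *\<^sub>R axis j (1::real)) \<bullet> (s *\<^sub>R axis i 1 + t *\<^sub>R axis j 1) = 2"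
  by (auto simp: inner_axis_axis algebra_simps)

lemma exists_other: "CARD('n) \<ge> 2 \<Longrightarrow> \<exists>j::'n::finite. j \<noteq> k"
proof (rule ccontr)
  assume "CARD('n) \<ge> 2" "\<not> (\<exists>j::'n::finite. j \<noteq> k)"
  then have "(UNIV::'n set) = {k}" by auto
  then have "CARD('n) = 1" by (metis card.empty card_insert_disjoint empty_iff finite.emptyI One_nat_def)
  with \<open>CARD('n) \<ge> 2\<close> show False by simp
qed

lemma long_iff: assumes "CARD('n) \<ge> 2"
  shows "long_rootB (v::real^'n) \<longleftrightarrow> v \<in> rootsB \<and> v \<bullet> v = 2"
proof
  assume "v \<in> rootsB \<and> v \<bullet> v = 2" then show "long_rootB v"
    unfolding long_rootB_def using roots_norm by fastforce
next
  assume l: "long_rootB v"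
  obtain k :: 'n where True by auto
  obtain j where "j \<noteq> k" using exists_other[OF assms] by auto
  then have "axis k 1 + axis j 1 \<in> (rootsB::(real^'n) set)"
    unfolding rootsB_def
    apply (intro UnI2 CollectI)
    apply (rule exI[of _ k], rule exI[of _ j], rule exI[of _ 1], rule exI[of _ 1])
    by simp
  with l have "(axis k 1 + axis j 1) \<bullet> (axis k 1 + axis j (1::real)) \<le> v \<bullet> v" "v \<in> rootsB"
    unfolding long_rootB_def by auto
  moreover have "(axis k 1 + axis j 1) \<bullet> (axis k 1 + axis j (1::real)) = 2"
    using second_norm[OF \<open>j \<noteq> k\<close>[symmetric], of 1 1] by simp
  ultimately show "v \<in> rootsB \<and> v \<bullet> v = 2" using roots_norm[of v] by auto
qed

lemma short_form: "v \<in> (rootsB::(real^'n::finite) set) \<Longrightarrow> v \<bullet> v = 1 \<Longrightarrow> \<exists>k r. (r = 1 \<or> r = -1) \<and> v = r *\<^sub>R axis k 1"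
proof -
  assume v: "v \<in> rootsB" "v \<bullet> v = 1"
  from v(1) show ?thesis
  proof (cases rule: roots_cases)
    case (a i) then show ?thesis by (metis scaleR_one scaleR_minus1_left)
  next
    case (b i j s t) then show ?thesis using second_norm[of i j s t] v(2) by simp
  qed
qed

lemma long_form: "v \<in> (rootsB::(real^'n) set) \<Longrightarrow> v \<bullet> v = 2 \<Longrightarrow>
   \<exists>i j s t. i \<noteq> j \<and> (s = 1 \<or> s = -1) \<and> (t = 1 \<or> t = -1) \<and> v = s *\<^sub>R axis i 1 + t *\<^sub>R axis j (1::real)"
proof -
  assume v: "v \<in> rootsB" "v \<bullet> v = 2"
  from v(1) show ?thesis
  proof (cases rule: roots_cases)
    case (a i) then show ?thesis using v(2) by (auto simp: inner_axis_axis)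
  next
    case (b i j s t) then show ?thesis by blast
  qed
qed

lemma mem2: "(i::'n::finite) \<noteq> j \<Longrightarrow> (s = 1 \<or> s = -1) \<Longrightarrow> (t = 1 \<or> t = -1) \<Longrightarrow>
   s *\<^sub>R axis i 1 + t *\<^sub>R axis j (1::real) \<in> rootsB"
  unfolding rootsB_def
  apply (intro UnI2 CollectI)
  apply (rule exI[of _ i], rule exI[of _ j], rule exI[of _ s], rule exI[of _ t])
  by simp

lemma int_half: "(x::real) \<in> \<int> \<Longrightarrow> 2 * x \<noteq> -3 \<and> 2 * x \<noteq> -1"
proof -
  assume "x \<in> \<int>"
  then obtain n where n: "x = of_int n" by (auto elim: Ints_cases)
  have "2 * (of_int n::real) = of_int (2*n)" by simp
  moreover have "2*n \<noteq> -3" "2*n \<noteq> -1" by presburger+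
  moreover have "(of_int (2*n)::real) \<noteq> of_int (-3)" "(of_int (2*n)::real) \<noteq> of_int (-1)"
    using \<open>2*n \<noteq> -3\<close> \<open>2*n \<noteq> -1\<close> by (simp only: of_int_eq_iff)+
  ultimately show ?thesis unfolding n by simp
qed

theorem lemma5p6:
  fixes P \<Delta> :: "(real^'n) set"
  assumes "CARD('n) \<ge> 2"
    and "positive_systemB P"
    and "\<Delta> \<subseteq> P" and "\<Delta> \<noteq> {}"
  shows "\<exists>\<alpha> \<beta>. \<alpha> \<in> P \<and> long_rootB \<alpha> \<and> \<beta> \<in> \<Delta>
            \<and> (\<forall>\<gamma>\<in>\<Delta>. \<alpha> + \<gamma> \<notin> rootsB) \<and> \<alpha> \<bullet> \<beta> \<noteq> 0"
proof -
  from assms(2) obtain w where reg: "\<forall>a\<in>(rootsB::(real^'n) set). a \<bullet> w \<noteq> 0"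
    and Pdef: "P = {a \<in> rootsB. a \<bullet> w > 0}"
    unfolding positive_systemB_def by blast
  note long = long_iff[OF assms(1)]
  define C where "C = {a \<in> P. long_rootB a \<and> (\<exists>\<beta>\<in>\<Delta>. a \<bullet> \<beta> \<noteq> 0)}"
  have finC: "finite C"
    by (rule finite_subset[OF _ finite_roots]) (auto simp: C_def Pdef)
  have negC: "a \<in> C" if "a \<in> rootsB" "a \<bullet> a = 2" "\<beta> \<in> \<Delta>" "a \<bullet> \<beta> \<noteq> 0" "a \<bullet> w > 0" for a \<beta>
    using that by (auto simp: C_def Pdef long)
  have neC: "C \<noteq> {}"
  proof -
    obtain \<beta> where b: "\<beta> \<in> \<Delta>" using assms(4) by auto
    then have bR: "\<beta> \<in> rootsB" using assms(3) Pdef by auto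
    then have "\<beta> \<noteq> 0" using roots_norm[of \<beta>] by auto
    then obtain k where k: "\<beta> $ k \<noteq> 0" using vec_eq_iff[of \<beta> 0] by auto
    obtain j where j: "j \<noteq> k" using exists_other[OF assms(1)] by auto
    define a1 where "a1 = (1::real) *\<^sub>R axis k 1 + 1 *\<^sub>R axis j (1::real)"
    define a2 where "a2 = (1::real) *\<^sub>R axis k 1 + (-1) *\<^sub>R axis j (1::real)"
    have a1R: "a1 \<in> rootsB" unfolding a1_def using mem2[of k j 1 1] j by simp
    have a2R: "a2 \<in> rootsB" unfolding a2_def using mem2[of k j 1 "-1"] j by simp
    have n1: "a1 \<bullet> a1 = 2" unfolding a1_def using second_norm[of k j 1 1] j by simp
    have n2: "a2 \<bullet> a2 = 2" unfolding a2_def using second_norm[of k j 1 "-1"] j by simp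
    have sum: "a1 \<bullet> \<beta> + a2 \<bullet> \<beta> = 2 * \<beta> $ k"
      unfolding a1_def a2_def by (simp add: inner_add_left inner_diff_left inner_axis')
    have key: "\<exists>a\<in>{a1, -a1, a2, -a2}. a \<in> C"
    proof (cases "a1 \<bullet> \<beta> \<noteq> 0")
      case True
      show ?thesis
      proof (cases "a1 \<bullet> w > 0")
        case True then show ?thesis using negC[OF a1R n1 b] \<open>a1 \<bullet> \<beta> \<noteq> 0\<close> by auto
      next
        case False moreover have "a1 \<bullet> w \<noteq> 0" using reg a1R by blast
        ultimately have "(-a1) \<bullet> w > 0" by simp
        then show ?thesis using negC[OF roots_neg[OF a1R] _ b] n1 \<open>a1 \<bullet> \<beta> \<noteq> 0\<close> by auto
      qed
    next
      case False
      then have nz: "a2 \<bullet> \<beta> \<noteq> 0" using sum k by auto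
      show ?thesis
      proof (cases "a2 \<bullet> w > 0")
        case True then show ?thesis using negC[OF a2R n2 b] nz by auto
      next
        case False moreover have "a2 \<bullet> w \<noteq> 0" using reg a2R by blast
        ultimately have "(-a2) \<bullet> w > 0" by simp
        then show ?thesis using negC[OF roots_neg[OF a2R] _ b] n2 nz by auto
      qed
    qed
    then show ?thesis by auto
  qed
  define m where "m = Max ((\<lambda>x. x \<bullet> w) ` C)"
  have "m \<in> (\<lambda>x. x \<bullet> w) ` C" unfolding m_def using finC neC by (intro Max_in) auto
  then obtain \<alpha> where \<alpha>C: "\<alpha> \<in> C" and m\<alpha>: "\<alpha> \<bullet> w = m" by auto
  have max: "x \<bullet> w \<le> \<alpha> \<bullet> w" if "x \<in> C" for x
    unfolding m\<alpha> m_def using finC that by (intro Max_ge) auto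
  from \<alpha>C obtain \<beta> where \<beta>: "\<beta> \<in> \<Delta>" "\<alpha> \<bullet> \<beta> \<noteq> 0" and \<alpha>P: "\<alpha> \<in> P" and \<alpha>L: "long_rootB \<alpha>"
    unfolding C_def by auto
  have \<alpha>R: "\<alpha> \<in> rootsB" and \<alpha>n: "\<alpha> \<bullet> \<alpha> = 2" and \<alpha>w: "\<alpha> \<bullet> w > 0"
    using \<alpha>L \<alpha>P long Pdef by auto
  have noadd: "\<alpha> + \<gamma> \<notin> rootsB" if \<gamma>: "\<gamma> \<in> \<Delta>" for \<gamma>
  proof
    assume r: "\<alpha> + \<gamma> \<in> rootsB"
    have \<gamma>R: "\<gamma> \<in> rootsB" and \<gamma>w: "\<gamma> \<bullet> w > 0" using \<gamma> assms(3) Pdef by auto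
    have int: "\<alpha> \<bullet> \<gamma> \<in> \<int>" using roots_int[OF \<alpha>R \<gamma>R] .
    have n: "(\<alpha> + \<gamma>) \<bullet> (\<alpha> + \<gamma>) = 2 + 2 * (\<alpha> \<bullet> \<gamma>) + \<gamma> \<bullet> \<gamma>"
      using \<alpha>n by (simp add: inner_add_left inner_add_right inner_commute)
    from roots_norm[OF \<gamma>R] show False
    proof
      assume g2: "\<gamma> \<bullet> \<gamma> = 2"
      have "\<alpha> \<bullet> \<gamma> = -1" using roots_norm[OF r] n g2 int_half[OF int] by auto
      moreover have "(\<alpha> + \<gamma>) \<bullet> \<gamma> \<noteq> 0" using \<open>\<alpha> \<bullet> \<gamma> = -1\<close> g2 by (simp add: inner_add_left)
      moreover have "(\<alpha> + \<gamma>) \<bullet> w > 0" using \<alpha>w \<gamma>w by (simp add: inner_add_left)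
      moreover have "(\<alpha> + \<gamma>) \<bullet> (\<alpha> + \<gamma>) = 2" using n g2 \<open>\<alpha> \<bullet> \<gamma> = -1\<close> by simp
      ultimately have "\<alpha> + \<gamma> \<in> C" using negC[OF r _ \<gamma>] by auto
      from max[OF this] \<gamma>w show False by (simp add: inner_add_left)
    next
      assume g1: "\<gamma> \<bullet> \<gamma> = 1"
      have ag: "\<alpha> \<bullet> \<gamma> = -1" using roots_norm[OF r] n g1 int_half[OF int] by auto
      obtain k r where rr: "r = 1 \<or> r = -1" and \<gamma>f: "\<gamma> = r *\<^sub>R axis k 1"
        using short_form[OF \<gamma>R g1] by auto
      obtain i j s t where ij: "i \<noteq> j" and ss: "s = 1 \<or> s = -1" and tt: "t = 1 \<or> t = -1"
        and \<alpha>f: "\<alpha> = s *\<^sub>R axis i 1 + t *\<^sub>R axis j (1::real)"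
        using long_form[OF \<alpha>R \<alpha>n] by auto
      have agf: "\<alpha> \<bullet> \<gamma> = r * ((if i = k then s else 0) + (if j = k then t else 0))"
        unfolding \<alpha>f \<gamma>f by (simp add: inner_add_left inner_axis_axis)
      have a2R: "\<alpha> + 2 *\<^sub>R \<gamma> \<in> rootsB"
      proof (cases "k = i")
        case True
        then have "r = -s" using ag agf ij rr ss by auto
        then have "\<alpha> + 2 *\<^sub>R \<gamma> = (-s) *\<^sub>R axis i 1 + t *\<^sub>R axis j (1::real)"
          unfolding \<alpha>f \<gamma>f using True by (auto simp: vec_eq_iff axis_def)
        moreover have "-s = 1 \<or> -s = -1" using ss by auto
        ultimately show ?thesis using mem2[OF ij _ tt, of "-s"] by simp
      next
        case False
        then have "k = j" "r = -t" using ag agf ij rr tt by (auto split: if_splits)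
        then have "\<alpha> + 2 *\<^sub>R \<gamma> = s *\<^sub>R axis i 1 + (-t) *\<^sub>R axis j (1::real)"
          unfolding \<alpha>f \<gamma>f by (auto simp: vec_eq_iff axis_def)
        moreover have "-t = 1 \<or> -t = -1" using tt by auto
        ultimately show ?thesis using mem2[OF ij ss, of "-t"] by simp
      qed
      have "(\<alpha> + 2 *\<^sub>R \<gamma>) \<bullet> (\<alpha> + 2 *\<^sub>R \<gamma>) = 2"
        using \<alpha>n ag g1 by (simp add: inner_add_left inner_add_right inner_commute)
      moreover have "(\<alpha> + 2 *\<^sub>R \<gamma>) \<bullet> \<gamma> \<noteq> 0" using ag g1 by (simp add: inner_add_left)
      moreover have "(\<alpha> + 2 *\<^sub>R \<gamma>) \<bullet> w > 0" using \<alpha>w \<gamma>w by (simp add: inner_add_left)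
      ultimately have "\<alpha> + 2 *\<^sub>R \<gamma> \<in> C" using negC[OF a2R _ \<gamma>] by auto
      from max[OF this] \<gamma>w show False by (simp add: inner_add_left)
    qed
  qed
  show ?thesis using \<alpha>P \<alpha>L \<beta> noadd by blast
qed

end
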